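(* Let $V$ be a finite totally ordered set and let $w$ be a derangement of $V$ (a fixed-point-free permutation of $V$). Then: (a) For distinct $t, t' \in U(w)$, the sets $E_{w,t}$ and $E_{w,t'}$ are disjoint. (b) If $s \in V$ is minimal (with respect to the order on $V$) in its $w$-cycle, then $E_{w,w(s)} \subseteq E_{w,s}$.
   Context: For a permutation $w$ of a finite totally ordered set $V$ and $t \in V$, define $\rho_w(t) = \{t, w(t), \ldots, w^{k-1}(t)\}$, where $k$ is the smallest positive integer with $w^k(t) \le t$, and define $\lambda_w(t) = w^{-\ell}(t)$, where $\ell$ is the smallest positive integer with $w^{-\ell}(t) \le t$. Define $E_{w,t} = \{\{\lambda_w(t), s\} : s \in \rho_w(t)\}$ (a set of 2-element subsets of $V$, i.e. potential edges of a graph on $V$). Let $U(w)$ denote the set of elements of $V$ that are not the minimal element of their $w$-cycle. *)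

theory Defs
  imports "HOL-Combinatorics.Permutations"
begin

definition rho :: "('a::linorder \<Rightarrow> 'a) \<Rightarrow> 'a \<Rightarrow> 'a set" where
  "rho w t = {(w ^^ i) t | i. i < (LEAST k. 0 < k \<and> (w ^^ k) t \<le> t)}"

definition lam :: "('a::linorder \<Rightarrow> 'a) \<Rightarrow> 'a \<Rightarrow> 'a" where
  "lam w t = (inv w ^^ (LEAST l. 0 < l \<and> (inv w ^^ l) t \<le> t)) t"

definition Eset :: "('a::linorder \<Rightarrow> 'a) \<Rightarrow> 'a \<Rightarrow> 'a set set" where
  "Eset w t = {{lam w t, s} | s. s \<in> rho w t}"

text \<open>Elements of V that are not the minimal element of their w-cycle.\<close>
definition Uset :: "'a::linorder set \<Rightarrow> ('a \<Rightarrow> 'a) \<Rightarrow> 'a set" where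
  "Uset V w = {t \<in> V. \<exists>n. (w ^^ n) t < t}"

end

theory Submission
  imports Defs "HOL-Combinatorics.Cycles"
begin

lemma qw_cancel:
  fixes q w :: "'a \<Rightarrow> 'a"
  assumes "\<And>x. q (w x) = x"
  shows "(q ^^ a) ((w ^^ a) x) = x"
proof (induction a arbitrary: x)
  case 0 then show ?case by simp
next
  case (Suc a)
  have "(q ^^ Suc a) y = (q ^^ a) (q y)" for y by (simp add: funpow_swap1)
  then have "(q ^^ Suc a) ((w ^^ Suc a) x) = (q ^^ a) (q (w ((w ^^ a) x)))"
    by simp
  also have "\<dots> = x" using assms Suc by simp
  finally show ?case .
qed

lemma qw_shift:
  fixes q w :: "'a \<Rightarrow> 'a"
  assumes "\<And>x. q (w x) = x" and "a \<le> b"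
  shows "(q ^^ a) ((w ^^ b) x) = (w ^^ (b - a)) x"
proof -
  have "(w ^^ b) x = (w ^^ a) ((w ^^ (b - a)) x)"
    using assms(2) by (metis funpow_add le_add_diff_inverse o_apply)
  then show ?thesis using qw_cancel[where q=q and w=w, OF assms(1)] by simp
qed

lemma lam_lt:
  fixes w :: "'a::linorder \<Rightarrow> 'a"
  assumes bij: "\<And>x. inv w (w x) = x" "\<And>x. w (inv w x) = x"
    and per: "(w ^^ m) t = t" "0 < m"
    and n: "(w ^^ n) t < t"
  shows "lam w t < t"
proof -
  let ?q = "inv w"
  let ?L = "LEAST l. 0 < l \<and> (?q ^^ l) t \<le> t"
  have qm: "(?q ^^ m) t = t" using qw_cancel[of ?q w m t] bij per by simp
  have ex: "0 < ?L \<and> (?q ^^ ?L) t \<le> t"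
    by (rule LeastI[of _ m]) (use qm per(2) in simp)
  have small: "t < (?q ^^ l) t" if "0 < l" "l < ?L" for l
  proof -
    have "\<not> (0 < l \<and> (?q ^^ l) t \<le> t)" by (rule not_less_Least[OF that(2)])
    then show ?thesis using that(1) by simp
  qed
  have "(?q ^^ ?L) t \<noteq> t"
  proof
    assume eq: "(?q ^^ ?L) t = t"
    have wL: "(w ^^ ?L) t = t"
      using qw_cancel[of w ?q ?L t] bij eq by simp
    define r where "r = n mod ?L"
    have r: "r < ?L" using ex r_def by simp
    have wr: "(w ^^ n) t = (w ^^ r) t" using funpow_mod_eq[where f=w and n="?L" and x=t and m=n, OF wL] r_def by simp
    have "(?q ^^ (?L - r)) t = (?q ^^ (?L - r)) ((w ^^ ?L) t)" using wL by simp
    also have "\<dots> = (w ^^ r) t" using qw_shift[of ?q w "?L - r" ?L t] bij r by simp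
    finally have eq2: "(?q ^^ (?L - r)) t = (w ^^ r) t" .
    show False
    proof (cases "r = 0")
      case True
      then show ?thesis using wr n by simp
    next
      case False
      then have "t < (?q ^^ (?L - r)) t" using small[of "?L - r"] r by simp
      then show ?thesis using eq2 wr n by simp
    qed
  qed
  then have "(?q ^^ ?L) t < t" using ex order_le_neq_trans by blast
  then show ?thesis unfolding lam_def .
qed

lemma rho_ge:
  fixes w :: "'a::linorder \<Rightarrow> 'a"
  assumes "i < (LEAST k. 0 < k \<and> (w ^^ k) t \<le> t)"
  shows "t \<le> (w ^^ i) t"
proof (cases "i = 0")
  case False
  then show ?thesis using not_less_Least[OF assms] by auto
qed simp

lemma partA_aux:
  fixes w :: "'a::linorder \<Rightarrow> 'a"
  assumes bij: "\<And>x. inv w (w x) = x" "\<And>x. w (inv w x) = x"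
    and lt: "lam w t' < t'"
    and i: "i < j"
    and j: "j < (LEAST k. 0 < k \<and> (w ^^ k) t' \<le> t')"
    and eqs: "(w ^^ i) t = (w ^^ j) t'"
    and eql: "lam w t = lam w t'"
  shows False
proof -
  let ?q = "inv w"
  let ?K = "LEAST k. 0 < k \<and> (w ^^ k) t' \<le> t'"
  define d where "d = j - i"
  have d: "0 < d" "d < ?K" using i j d_def by auto
  have "t = (?q ^^ i) ((w ^^ i) t)" using qw_cancel[of ?q w i t] bij by simp
  also have "\<dots> = (?q ^^ i) ((w ^^ j) t')" using eqs by simp
  also have "\<dots> = (w ^^ d) t'" using qw_shift[of ?q w i j t'] bij i d_def by simp
  finally have td: "t = (w ^^ d) t'" .
  have big: "t' < (w ^^ e) t'" if "0 < e" "e < ?K" for e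
  proof -
    have "\<not> (0 < e \<and> (w ^^ e) t' \<le> t')" by (rule not_less_Least[OF that(2)])
    then show ?thesis using that(1) by simp
  qed
  have tt: "t' < t" using big[OF d] td by simp
  have qd: "(?q ^^ d) t = t'" using td qw_cancel[of ?q w d t'] bij by simp
  let ?L = "LEAST l. 0 < l \<and> (?q ^^ l) t \<le> t"
  have Ld: "?L \<le> d" by (rule Least_le) (use qd tt d in simp)
  have lamt: "lam w t = (?q ^^ ?L) t" unfolding lam_def by simp
  have "(?q ^^ ?L) t = (w ^^ (d - ?L)) t'"
    using td qw_shift[of ?q w ?L d t'] bij Ld by simp
  then have "t' \<le> lam w t"
  proof (cases "d - ?L = 0")
    case True then show ?thesis using lamt \<open>(?q ^^ ?L) t = (w ^^ (d - ?L)) t'\<close> by (simp only: True) simp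
  next
    case False
    have "d - ?L < ?K" using d by simp
    then have "t' < (w ^^ (d - ?L)) t'" using big[of "d - ?L"] False by simp
    then show ?thesis using lamt \<open>(?q ^^ ?L) t = (w ^^ (d - ?L)) t'\<close> by simp
  qed
  then show False using eql lt by simp
qed

theorem lemma3p4:
  fixes V :: "'a::linorder set" and w :: "'a \<Rightarrow> 'a"
  assumes "finite V" and "w permutes V" and "\<forall>x\<in>V. w x \<noteq> x"
  shows "(\<forall>t\<in>Uset V w. \<forall>t'\<in>Uset V w. t \<noteq> t' \<longrightarrow> Eset w t \<inter> Eset w t' = {})
    \<and> (\<forall>s\<in>V. (\<forall>n. s \<le> (w ^^ n) s) \<longrightarrow> Eset w (w s) \<subseteq> Eset w s)"
proof -
  have bij: "\<And>x. inv w (w x) = x" "\<And>x. w (inv w x) = x"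
    using assms(2) permutes_inverses by metis+
  have "permutation w" using assms(1,2) permutation_permutes by blast
  then obtain m where m: "(w ^^ m) = id" "0 < m" using permutation_is_nilpotent by blast
  have per: "\<And>x. (w ^^ m) x = x" using m by simp
  have lamlt: "\<And>t. t \<in> Uset V w \<Longrightarrow> lam w t < t"
    unfolding Uset_def using lam_lt[OF bij per m(2)] by blast
  have A: "\<forall>t\<in>Uset V w. \<forall>t'\<in>Uset V w. t \<noteq> t' \<longrightarrow> Eset w t \<inter> Eset w t' = {}"
  proof (intro ballI impI)
    fix t t' assume t: "t \<in> Uset V w" and t': "t' \<in> Uset V w" and ne: "t \<noteq> t'"
    show "Eset w t \<inter> Eset w t' = {}"
    proof (rule ccontr)
      assume "Eset w t \<inter> Eset w t' \<noteq> {}"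
      then obtain i j where i: "i < (LEAST k. 0 < k \<and> (w ^^ k) t \<le> t)"
        and j: "j < (LEAST k. 0 < k \<and> (w ^^ k) t' \<le> t')"
        and e: "{lam w t, (w ^^ i) t} = {lam w t', (w ^^ j) t'}"
        unfolding Eset_def rho_def by blast
      have l1: "lam w t < (w ^^ i) t" using lamlt[OF t] rho_ge[OF i] by simp
      have l2: "lam w t' < (w ^^ j) t'" using lamlt[OF t'] rho_ge[OF j] by simp
      have eql: "lam w t = lam w t'" and eqs: "(w ^^ i) t = (w ^^ j) t'"
        using e l1 l2 by (auto simp: doubleton_eq_iff)
      have "i \<noteq> j"
      proof
        assume "i = j"
        then have "(inv w ^^ i) ((w ^^ i) t) = (inv w ^^ i) ((w ^^ i) t')" using eqs by simp
        then show False using qw_cancel[of "inv w" w i] bij ne by metis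
      qed
      then consider "i < j" | "j < i" by linarith
      then show False
      proof cases
        case 1 then show False using partA_aux[OF bij lamlt[OF t'] 1 j eqs eql] by simp
      next
        case 2 then show False using partA_aux[OF bij lamlt[OF t] 2 i eqs[symmetric] eql[symmetric]] by simp
      qed
    qed
  qed
  have B: "\<forall>s\<in>V. (\<forall>n. s \<le> (w ^^ n) s) \<longrightarrow> Eset w (w s) \<subseteq> Eset w s"
  proof (intro ballI impI)
    fix s assume sV: "s \<in> V" and mn: "\<forall>n. s \<le> (w ^^ n) s"
    let ?q = "inv w"
    have qge: "s \<le> (?q ^^ l) s" for l
    proof -
      have "w ^^ (m * l) = id" by (simp only: funpow_mult[symmetric] m(1) id_funpow)
      then have "(w ^^ (m * l)) s = s" by simp
      then have "(?q ^^ l) s = (?q ^^ l) ((w ^^ (m * l)) s)" by simp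
      also have "\<dots> = (w ^^ (m * l - l)) s"
        using qw_shift[of ?q w l "m * l"] bij m(2) by simp
      finally show ?thesis using mn by simp
    qed
    let ?L = "LEAST l. 0 < l \<and> (?q ^^ l) s \<le> s"
    have qm: "(?q ^^ m) s = s" using qw_cancel[of ?q w m s] bij per by simp
    have "(?q ^^ ?L) s \<le> s" using LeastI[of "\<lambda>l. 0 < l \<and> (?q ^^ l) s \<le> s" m] qm m(2) by simp
    then have lams: "lam w s = s" unfolding lam_def using qge[of ?L] by simp
    have L1: "(LEAST l. 0 < l \<and> (?q ^^ l) (w s) \<le> w s) = 1"
      by (rule Least_equality) (use bij mn[rule_format, of 1] in auto)
    have lamws: "lam w (w s) = s" unfolding lam_def L1 using bij by simp
    let ?K = "LEAST k. 0 < k \<and> (w ^^ k) s \<le> s"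
    have Kp: "0 < ?K \<and> (w ^^ ?K) s \<le> s" using LeastI[of "\<lambda>k. 0 < k \<and> (w ^^ k) s \<le> s" m] per m(2) by simp
    have wK: "(w ^^ ?K) s = s" using Kp mn by (meson order_antisym)
    show "Eset w (w s) \<subseteq> Eset w s"
    proof
      fix e assume "e \<in> Eset w (w s)"
      then obtain i where e: "e = {s, (w ^^ i) (w s)}" unfolding Eset_def rho_def lamws by blast
      have "(w ^^ i) (w s) = (w ^^ Suc i) s" by (simp add: funpow_Suc_right del: funpow.simps)
      also have "\<dots> = (w ^^ (Suc i mod ?K)) s" using funpow_mod_eq[where f=w and n="?K" and x=s, OF wK] by simp
      finally have "e = {lam w s, (w ^^ (Suc i mod ?K)) s}" using e lams by simp
      moreover have "Suc i mod ?K < ?K" using Kp by simp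
      ultimately show "e \<in> Eset w s" unfolding Eset_def rho_def by blast
    qed
  qed
  show ?thesis using A B by blast
qed

end
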